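(* Let $(\Omega,\mathcal{F},\mathbb{P})$ be a nonatomic probability space, let $a>0$, $c\ge0$, $C=\frac1a(1+ac-\sqrt{1+a^2c^2})$, and let $u(x)=C$ for $x\ge c$ and $u(x)=\frac1a(1+ax-\sqrt{1+a^2x^2})$ for $x<c$. Let $\alpha<C$ and set $\mathcal{A}_u^\infty=\{X\in L^\infty:\mathbb{E}[u(X)]\ge\alpha\}$. Let $S=(S_0,S_T)$ be a traded asset with $S_T\in L^\infty$ and assume $\rho_{\mathcal{A}_u^\infty,S}$ is finite-valued on $L^\infty$. Then $\mathrm{Index}_{\mathrm{fin}}(\rho_{\mathcal{A}_u^\infty,S})=1$ and the infimum defining the index is attained.
   Context: A traded asset is $S=(S_0,S_T)$ with $S_0>0$, $S_T\ge0$ a.s., $S_T\ne0$. For $\mathcal{B}\subset L^\infty$, $\rho_{\mathcal{B},S}(X)=\inf\{m\in\mathbb{R}:X+\frac{m}{S_0}S_T\in\mathcal{B}\}$. For a convex, law-invariant acceptance set $\mathcal{A}\subset L^\infty$ with $\rho_{\mathcal{A},S}$ finite-valued on $L^\infty$, $\mathrm{Index}_{\mathrm{fin}}(\rho_{\mathcal{A},S})=\inf\{p\in[1,\infty):\text{the closure of }\mathcal{A}\text{ in }L^p\text{ has nonempty interior in }L^p\}$, with $\inf\emptyset=\infty$; the index is attained if this infimum belongs to the set. *)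

theory Defs
  imports "HOL-Probability.Probability"
begin

text \<open>Random variables are real-valued functions on the sample space; L^p spaces are
  represented by their (measurable) representatives, with the L^p seminorm.\<close>

definition nonatomic :: "'a measure \<Rightarrow> bool" where
  "nonatomic M \<longleftrightarrow> (\<forall>A\<in>sets M. measure M A > 0 \<longrightarrow>
      (\<exists>B\<in>sets M. B \<subseteq> A \<and> 0 < measure M B \<and> measure M B < measure M A))"

definition Linf :: "'a measure \<Rightarrow> ('a \<Rightarrow> real) set" where
  "Linf M = {X. X \<in> borel_measurable M \<and> (\<exists>B. AE \<omega> in M. \<bar>X \<omega>\<bar> \<le> B)}"

definition Lp :: "'a measure \<Rightarrow> real \<Rightarrow> ('a \<Rightarrow> real) set" where
  "Lp M p = {X. X \<in> borel_measurable M \<and> integrable M (\<lambda>\<omega>. \<bar>X \<omega>\<bar> powr p)}"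

definition Lp_norm :: "'a measure \<Rightarrow> real \<Rightarrow> ('a \<Rightarrow> real) \<Rightarrow> real" where
  "Lp_norm M p X = (integral\<^sup>L M (\<lambda>\<omega>. \<bar>X \<omega>\<bar> powr p)) powr (1 / p)"

definition Lp_closure :: "'a measure \<Rightarrow> real \<Rightarrow> ('a \<Rightarrow> real) set \<Rightarrow> ('a \<Rightarrow> real) set" where
  "Lp_closure M p A = {X \<in> Lp M p. \<forall>\<epsilon>>0. \<exists>Y\<in>A. Lp_norm M p (\<lambda>\<omega>. X \<omega> - Y \<omega>) < \<epsilon>}"

definition Lp_interior_nonempty :: "'a measure \<Rightarrow> real \<Rightarrow> ('a \<Rightarrow> real) set \<Rightarrow> bool" where
  "Lp_interior_nonempty M p B \<longleftrightarrow> (\<exists>X\<in>Lp M p. \<exists>\<epsilon>>0.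
      \<forall>Y\<in>Lp M p. Lp_norm M p (\<lambda>\<omega>. Y \<omega> - X \<omega>) < \<epsilon> \<longrightarrow> Y \<in> B)"

definition index_set :: "'a measure \<Rightarrow> ('a \<Rightarrow> real) set \<Rightarrow> real set" where
  "index_set M A = {p. 1 \<le> p \<and> Lp_interior_nonempty M p (Lp_closure M p A)}"

text \<open>Index_fin; the infimum of the empty set is \<infinity> in ereal.\<close>
definition Index_fin :: "'a measure \<Rightarrow> ('a \<Rightarrow> real) set \<Rightarrow> ereal" where
  "Index_fin M A = Inf (ereal ` index_set M A)"

definition index_attained :: "'a measure \<Rightarrow> ('a \<Rightarrow> real) set \<Rightarrow> bool" where
  "index_attained M A \<longleftrightarrow> Index_fin M A \<in> ereal ` index_set M A"

definition traded_asset :: "'a measure \<Rightarrow> real \<Rightarrow> ('a \<Rightarrow> real) \<Rightarrow> bool" where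
  "traded_asset M S0 ST \<longleftrightarrow> S0 > 0 \<and> ST \<in> borel_measurable M \<and>
      (AE \<omega> in M. ST \<omega> \<ge> 0) \<and> \<not> (AE \<omega> in M. ST \<omega> = 0)"

definition rho :: "('a \<Rightarrow> real) set \<Rightarrow> real \<Rightarrow> ('a \<Rightarrow> real) \<Rightarrow> ('a \<Rightarrow> real) \<Rightarrow> ereal" where
  "rho B S0 ST X = Inf {ereal m | m. (\<lambda>\<omega>. X \<omega> + (m / S0) * ST \<omega>) \<in> B}"

definition finite_valued_on_Linf :: "'a measure \<Rightarrow> (('a \<Rightarrow> real) \<Rightarrow> ereal) \<Rightarrow> bool" where
  "finite_valued_on_Linf M r \<longleftrightarrow> (\<forall>X\<in>Linf M. \<bar>r X\<bar> \<noteq> \<infinity>)"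

definition uC :: "real \<Rightarrow> real \<Rightarrow> real" where
  "uC a c = (1 + a * c - sqrt (1 + a\<^sup>2 * c\<^sup>2)) / a"

definition u :: "real \<Rightarrow> real \<Rightarrow> real \<Rightarrow> real" where
  "u a c x = (if x \<ge> c then uC a c else (1 + a * x - sqrt (1 + a\<^sup>2 * x\<^sup>2)) / a)"

definition A_u_inf :: "'a measure \<Rightarrow> real \<Rightarrow> real \<Rightarrow> real \<Rightarrow> ('a \<Rightarrow> real) set" where
  "A_u_inf M a c \<alpha> = {X \<in> Linf M. integral\<^sup>L M (\<lambda>\<omega>. u a c (X \<omega>)) \<ge> \<alpha>}"

end

theory Submission
  imports Defs
begin

lemma sqrt_lip_aux:
  fixes s t :: real assumes "t < s" "0 \<le> s"
  shows "sqrt (1 + t\<^sup>2) \<le> sqrt (1 + s\<^sup>2) + (s - t)"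
proof -
  have "1 + t\<^sup>2 \<le> (sqrt (1 + s\<^sup>2) + (s - t))\<^sup>2"
  proof -
    have q: "(sqrt (1 + s\<^sup>2))\<^sup>2 = 1 + s\<^sup>2" by simp
    have ss: "\<bar>s\<bar> \<le> sqrt (1 + s\<^sup>2)" by (simp add: real_le_rsqrt)
    have "t\<^sup>2 - s\<^sup>2 = (s - t) * (- s - t)" by (simp add: power2_eq_square algebra_simps)
    also have "\<dots> \<le> (s - t) * (2 * \<bar>s\<bar> + (s - t))"
      using assms by (intro mult_left_mono) auto
    also have "\<dots> \<le> (s - t) * (2 * sqrt (1 + s\<^sup>2) + (s - t))"
      using assms ss by (intro mult_left_mono) auto
    finally show ?thesis using q by (simp add: power2_eq_square algebra_simps)
  qed
  moreover have "0 \<le> sqrt (1 + s\<^sup>2) + (s - t)" using assms by simp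
  ultimately show ?thesis by (simp add: real_sqrt_le_iff real_le_lsqrt)
qed

lemma u_lower:
  assumes "a > 0" "c \<ge> 0"
  shows "u a c y \<ge> uC a c - 2 * \<bar>y - c\<bar>"
proof (cases "y \<ge> c")
  case True then show ?thesis by (simp add: u_def)
next
  case False
  have "sqrt (1 + (a*y)\<^sup>2) \<le> sqrt (1 + (a*c)\<^sup>2) + (a*c - a*y)"
    using False assms by (intro sqrt_lip_aux) (auto intro: mult_strict_left_mono)
  hence h: "sqrt (1 + a\<^sup>2*y\<^sup>2) \<le> sqrt (1 + a\<^sup>2*c\<^sup>2) + a*(c - y)"
    by (simp add: power_mult_distrib algebra_simps)
  have "uC a c - 2 * \<bar>y - c\<bar> = ((1 + a * c - sqrt (1 + a\<^sup>2 * c\<^sup>2)) - 2*a*(c-y)) / a"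
    using False assms by (simp add: uC_def field_simps)
  also have "\<dots> \<le> (1 + a * y - sqrt (1 + a\<^sup>2 * y\<^sup>2)) / a"
  proof (intro divide_right_mono)
    show "1 + a * c - sqrt (1 + a\<^sup>2 * c\<^sup>2) - 2 * a * (c - y) \<le> 1 + a * y - sqrt (1 + a\<^sup>2 * y\<^sup>2)"
      using h by (simp add: algebra_simps)
  qed (use assms in auto)
  finally show ?thesis using False by (simp add: u_def)
qed

lemma u_meas[measurable]: "u a c \<in> borel_measurable borel"
  unfolding u_def by measurable

theorem corollary6p9:
  fixes M :: "'a measure" and a c \<alpha> S0 :: real and ST :: "'a \<Rightarrow> real"
  assumes "prob_space M"
    and "nonatomic M"
    and "a > 0" and "c \<ge> 0"
    and "\<alpha> < uC a c"
    and "traded_asset M S0 ST" and "ST \<in> Linf M"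
    and "finite_valued_on_Linf M (rho (A_u_inf M a c \<alpha>) S0 ST)"
  shows "Index_fin M (A_u_inf M a c \<alpha>) = 1 \<and> index_attained M (A_u_inf M a c \<alpha>)"
proof -
  interpret P: prob_space M by fact
  define A where "A = A_u_inf M a c \<alpha>"
  define C where "C = uC a c"
  have Lp1: "Lp M 1 = {X. integrable M X}"
    unfolding Lp_def by (auto simp: integrable_abs_iff)
  have norm1: "Lp_norm M 1 X = (\<integral>\<omega>. \<bar>X \<omega>\<bar> \<partial>M)" for X
    unfolding Lp_norm_def by (simp add: integral_nonneg_AE)
  have clos: "Y \<in> Lp_closure M 1 A" if Yi: "integrable M Y" and Yc: "(\<integral>\<omega>. \<bar>Y \<omega> - c\<bar> \<partial>M) < (C - \<alpha>) / 2" for Y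
  proof -
    have Ym[measurable]: "Y \<in> borel_measurable M" using Yi by auto
    define cl where "cl = (\<lambda>(n::nat) y. max (- real n) (min (real n) (y::real)))"
    have clm[measurable]: "(\<lambda>\<omega>. cl n (Y \<omega>)) \<in> borel_measurable M" for n
      unfolding cl_def by measurable
    have lim: "(\<lambda>n. \<integral>\<omega>. \<bar>Y \<omega> - cl n (Y \<omega>)\<bar> \<partial>M) \<longlonglongrightarrow> (\<integral>\<omega>. 0 \<partial>M)"
    proof (rule integral_dominated_convergence[where w="\<lambda>\<omega>. \<bar>Y \<omega>\<bar>"])
      show "integrable M (\<lambda>\<omega>. \<bar>Y \<omega>\<bar>)" using Yi by auto
      show "AE x in M. (\<lambda>i. \<bar>Y x - cl i (Y x)\<bar>) \<longlonglongrightarrow> 0"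
      proof (rule AE_I2)
        fix x
        obtain N :: nat where "\<bar>Y x\<bar> \<le> real N" using real_arch_simple by blast
        hence "\<forall>n\<ge>N. \<bar>Y x - cl n (Y x)\<bar> = 0"
          unfolding cl_def by (auto simp: max_def min_def)
        thus "(\<lambda>i. \<bar>Y x - cl i (Y x)\<bar>) \<longlonglongrightarrow> 0"
          by (intro tendsto_eventually) (auto simp: eventually_sequentially)
      qed
      show "AE x in M. norm \<bar>Y x - cl i (Y x)\<bar> \<le> \<bar>Y x\<bar>" for i
        unfolding cl_def by (intro AE_I2) (auto simp: max_def min_def)
    qed auto
    show ?thesis unfolding Lp_closure_def
    proof (intro CollectI conjI allI impI)
      show "Y \<in> Lp M 1" using Lp1 Yi by auto
      fix \<epsilon> :: real assume e: "\<epsilon> > 0"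
      from lim e obtain N1 where N1: "\<And>n. n \<ge> N1 \<Longrightarrow> \<bar>(\<integral>\<omega>. \<bar>Y \<omega> - cl n (Y \<omega>)\<bar> \<partial>M)\<bar> < \<epsilon>"
        unfolding LIMSEQ_def by (auto simp: dist_real_def)
      obtain N2 :: nat where N2: "c \<le> real N2" using real_arch_simple by blast
      define n where "n = max N1 N2"
      have nc: "c \<le> real n" using N2 unfolding n_def by auto
      let ?Z = "\<lambda>\<omega>. cl n (Y \<omega>)"
      have bnd: "\<bar>?Z \<omega>\<bar> \<le> real n" for \<omega> unfolding cl_def by auto
      have Zi: "integrable M ?Z"
        by (rule P.integrable_const_bound[where B="real n"]) (use bnd in auto)
      have ZL: "?Z \<in> Linf M" unfolding Linf_def using bnd by auto
      have contr: "\<bar>?Z \<omega> - c\<bar> \<le> \<bar>Y \<omega> - c\<bar>" for \<omega>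
        using nc \<open>c \<ge> 0\<close> unfolding cl_def by (auto simp: max_def min_def)
      have ub: "\<bar>u a c y\<bar> \<le> \<bar>C\<bar> + 2 * \<bar>y - c\<bar> + \<bar>C\<bar>" for y
      proof -
        have "u a c y \<le> C"
        proof (cases "y \<ge> c")
          case False
          have "u a c y \<le> u a c y + 2 * \<bar>y - c\<bar>" by simp
          show ?thesis
          proof -
            have "1 + a*y - sqrt (1 + a\<^sup>2*y\<^sup>2) \<le> 1 + a*c - sqrt (1 + a\<^sup>2*c\<^sup>2)"
            proof -
              have "sqrt (1 + (a*c)\<^sup>2) - sqrt (1 + (a*y)\<^sup>2) \<le> a*c - a*y"
              proof (cases "a*y \<ge> 0")
                case True
                have "sqrt (1 + (a*c)\<^sup>2) \<le> sqrt (1 + (a*y)\<^sup>2) + (a*c - a*y)"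
                proof -
                  have "1 + (a*c)\<^sup>2 \<le> (sqrt (1 + (a*y)\<^sup>2) + (a*c - a*y))\<^sup>2"
                  proof -
                    have ay1: "a*y \<le> sqrt (1 + (a*y)\<^sup>2)" by (simp add: real_le_rsqrt)
                    moreover have ay2: "a*y < a*c" using False \<open>a>0\<close> by simp
                    ultimately have "(a*c)\<^sup>2 - (a*y)\<^sup>2 \<le> 2 * sqrt (1 + (a*y)\<^sup>2)*(a*c - a*y) + (a*c-a*y)\<^sup>2"
                    proof -
                      have "(a*c - a*y) * (2*(a*y)) \<le> (a*c - a*y) * (2 * sqrt (1 + (a*y)\<^sup>2))"
                        using ay1 ay2 by (intro mult_left_mono) auto
                      moreover have "(a*c)\<^sup>2 - (a*y)\<^sup>2 = (a*c - a*y) * (2*(a*y)) + (a*c-a*y)\<^sup>2"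
                        by (simp add: power2_eq_square algebra_simps)
                      ultimately show ?thesis by (simp add: algebra_simps)
                    qed
                    thus ?thesis by (simp add: power2_eq_square algebra_simps)
                  qed
                  moreover have "0 \<le> sqrt (1 + (a*y)\<^sup>2) + (a*c - a*y)" using False \<open>a>0\<close> by simp
                  ultimately show ?thesis by (simp add: real_sqrt_le_iff real_le_lsqrt)
                qed
                thus ?thesis by simp
              next
                case False2: False
                have "sqrt (1 + (a*c)\<^sup>2) \<le> 1 + a*c"
                  using \<open>a>0\<close> \<open>c\<ge>0\<close> by (intro real_le_lsqrt) (auto simp: power2_eq_square algebra_simps)
                moreover have "1 \<le> sqrt (1 + (a*y)\<^sup>2)"
                  by simp
                ultimately show ?thesis using False2 by linarith
              qed
              thus ?thesis by (simp add: power_mult_distrib)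
            qed
            thus ?thesis using False \<open>a>0\<close> by (simp add: u_def C_def uC_def divide_right_mono)
          qed
        qed (simp add: u_def C_def)
        thus ?thesis using u_lower[OF \<open>a>0\<close> \<open>c\<ge>0\<close>, of y] unfolding C_def by linarith
      qed
      have uZi: "integrable M (\<lambda>\<omega>. u a c (?Z \<omega>))"
      proof (rule P.integrable_const_bound[where B="\<bar>C\<bar> + 2 * (real n + \<bar>c\<bar>) + \<bar>C\<bar>"])
        show "AE x in M. norm (u a c (?Z x)) \<le> \<bar>C\<bar> + 2 * (real n + \<bar>c\<bar>) + \<bar>C\<bar>"
        proof (rule AE_I2)
          fix x
          have "\<bar>?Z x - c\<bar> \<le> real n + \<bar>c\<bar>" using bnd[of x] by linarith
          thus "norm (u a c (?Z x)) \<le> \<bar>C\<bar> + 2 * (real n + \<bar>c\<bar>) + \<bar>C\<bar>"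
            using ub[of "?Z x"] by simp
        qed
      qed simp
      have i1: "integrable M (\<lambda>\<omega>. \<bar>?Z \<omega> - c\<bar>)" using Zi by auto
      have i2: "integrable M (\<lambda>\<omega>. \<bar>Y \<omega> - c\<bar>)" using Yi by auto
      have c1: "(\<integral>\<omega>. u a c (?Z \<omega>) \<partial>M) \<ge> (\<integral>\<omega>. C - 2 * \<bar>?Z \<omega> - c\<bar> \<partial>M)"
        using u_lower[OF \<open>a>0\<close> \<open>c\<ge>0\<close>] uZi i1 unfolding C_def
        by (intro integral_mono) auto
      have c2: "(\<integral>\<omega>. C - 2 * \<bar>?Z \<omega> - c\<bar> \<partial>M) = C - 2 * (\<integral>\<omega>. \<bar>?Z \<omega> - c\<bar> \<partial>M)"
        using i1 by (simp add: P.prob_space)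
      have c3: "(\<integral>\<omega>. \<bar>?Z \<omega> - c\<bar> \<partial>M) \<le> (\<integral>\<omega>. \<bar>Y \<omega> - c\<bar> \<partial>M)"
        using i1 i2 contr by (intro integral_mono) auto
      have "(\<integral>\<omega>. u a c (?Z \<omega>) \<partial>M) \<ge> \<alpha>" using Yc c1 c2 c3 by argo
      hence ZA: "?Z \<in> A" using ZL unfolding A_def A_u_inf_def by auto
      have "Lp_norm M 1 (\<lambda>\<omega>. Y \<omega> - ?Z \<omega>) < \<epsilon>"
        using N1[of n] unfolding norm1 n_def by auto
      with ZA show "\<exists>Z\<in>A. Lp_norm M 1 (\<lambda>\<omega>. Y \<omega> - Z \<omega>) < \<epsilon>" by (intro bexI[of _ ?Z])
    qed
  qed
  have one: "1 \<in> index_set M A"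
    unfolding index_set_def Lp_interior_nonempty_def
  proof (intro CollectI conjI bexI[of _ "\<lambda>_. c"] exI[of _ "(C - \<alpha>) / 2"] ballI impI)
    show "(\<lambda>_. c) \<in> Lp M 1" using Lp1 by auto
    show "0 < (C - \<alpha>) / 2" using assms(5) unfolding C_def by simp
    fix Y assume "Y \<in> Lp M 1" "Lp_norm M 1 (\<lambda>\<omega>. Y \<omega> - c) < (C - \<alpha>) / 2"
    thus "Y \<in> Lp_closure M 1 A" using clos Lp1 norm1 by auto
  qed simp
  have "Index_fin M A = 1"
    unfolding Index_fin_def
  proof (rule Inf_eqI)
    show "\<And>i. i \<in> ereal ` index_set M A \<Longrightarrow> 1 \<le> i" unfolding index_set_def by auto
    show "\<And>y. (\<And>i. i \<in> ereal ` index_set M A \<Longrightarrow> y \<le> i) \<Longrightarrow> y \<le> 1"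
      using one by (metis image_eqI one_ereal_def)
  qed
  moreover have "index_attained M A"
    unfolding index_attained_def using \<open>Index_fin M A = 1\<close> one
    by (metis image_eqI one_ereal_def)
  ultimately show ?thesis unfolding A_def by blast
qed

end
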